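(* Let $r\ge 1$ and let $M$ be a finite list of nonzero vectors generating $\mathbb{F}_2^r$, in which each $u\in\mathbb{F}_2^r\setminus\{0\}$ appears with multiplicity $a_u\ge 0$. Assume the $a_u$ ($u\neq 0$) are not all of the same parity. Let $M'$ be the list in which each $u\in\mathbb{F}_2^r\setminus\{0\}$ appears with multiplicity $a_u+1$. Then $d(M)=d(M')$.
   Context: For a finite list $M=(v_1,\dots,v_n)$ of nonzero vectors generating $\mathbb{F}_2^r$, the Cayley graph $G(\mathbb{F}_2^r,M)$ has Laplacian $L$ indexed by $\mathbb{F}_2^r$ with $L_{u,u}=n$ and $L_{u,w}=-\#\{i:u+v_i=w\}$ for $u\ne w$; $\operatorname{coker}L\cong\mathbb{Z}\oplus K(G)$ with $K(G)$ finite abelian (the sandpile group). $d(M)$ denotes the number of even-order cyclic factors in the invariant factor decomposition of $K(G(\mathbb{F}_2^r,M))$, i.e. $d(M)=\dim_{\mathbb{F}_2}K(G)\otimes\mathbb{Z}/2\mathbb{Z}$. *)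

theory Defs
  imports Main
begin

text \<open>Vectors of F_2^r are modelled as functions nat => bool with support in {0..<r};
  addition is pointwise exclusive or.\<close>

definition F2vecs :: "nat \<Rightarrow> (nat \<Rightarrow> bool) set" where
  "F2vecs r = {v. \<forall>i. r \<le> i \<longrightarrow> \<not> v i}"

definition F2zero :: "nat \<Rightarrow> bool" where
  "F2zero = (\<lambda>_. False)"

definition F2add :: "(nat \<Rightarrow> bool) \<Rightarrow> (nat \<Rightarrow> bool) \<Rightarrow> (nat \<Rightarrow> bool)" where
  "F2add u v = (\<lambda>i. u i \<noteq> v i)"

definition F2comb :: "(nat \<Rightarrow> bool) list \<Rightarrow> nat set \<Rightarrow> (nat \<Rightarrow> bool)" where
  "F2comb M S = (\<lambda>j. odd (card {i \<in> S. (M ! i) j}))"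

definition generates :: "nat \<Rightarrow> (nat \<Rightarrow> bool) list \<Rightarrow> bool" where
  "generates r M \<longleftrightarrow> (\<forall>w \<in> F2vecs r. \<exists>S \<subseteq> {..<length M}. w = F2comb M S)"

definition cayley_laplacian :: "(nat \<Rightarrow> bool) list \<Rightarrow> (nat \<Rightarrow> bool) \<Rightarrow> (nat \<Rightarrow> bool) \<Rightarrow> int" where
  "cayley_laplacian M u w =
     (if u = w then int (length M)
      else - int (card {i. i < length M \<and> F2add u (M ! i) = w}))"

text \<open>The lattice Z^V (integer vectors indexed by V = F_2^r, zero outside V).\<close>
definition int_vecs :: "nat \<Rightarrow> ((nat \<Rightarrow> bool) \<Rightarrow> int) set" where
  "int_vecs r = {x. \<forall>u. u \<notin> F2vecs r \<longrightarrow> x u = 0}"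

definition lap_apply :: "nat \<Rightarrow> (nat \<Rightarrow> bool) list \<Rightarrow> ((nat \<Rightarrow> bool) \<Rightarrow> int) \<Rightarrow> ((nat \<Rightarrow> bool) \<Rightarrow> int)" where
  "lap_apply r M x = (\<lambda>u. if u \<in> F2vecs r then (\<Sum>w\<in>F2vecs r. cayley_laplacian M u w * x w) else 0)"

text \<open>Image of L in Z^V (so that coker L = Z^V / lap_image).\<close>
definition lap_image :: "nat \<Rightarrow> (nat \<Rightarrow> bool) list \<Rightarrow> ((nat \<Rightarrow> bool) \<Rightarrow> int) set" where
  "lap_image r M = lap_apply r M ` int_vecs r"

text \<open>Preimage in Z^V of the torsion subgroup K(G) of coker L.\<close>
definition torsion_preimage :: "nat \<Rightarrow> (nat \<Rightarrow> bool) list \<Rightarrow> ((nat \<Rightarrow> bool) \<Rightarrow> int) set" where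
  "torsion_preimage r M = {x \<in> int_vecs r. \<exists>k::int. k > 0 \<and> (\<lambda>u. k * x u) \<in> lap_image r M}"

text \<open>K(G) tensor Z/2 = K / 2K = T / (2T + im L) where T is the torsion preimage.\<close>
definition sandpile_mod2 :: "nat \<Rightarrow> (nat \<Rightarrow> bool) list \<Rightarrow> ((nat \<Rightarrow> bool) \<Rightarrow> int) set set" where
  "sandpile_mod2 r M =
     torsion_preimage r M //
       {(x, y). x \<in> torsion_preimage r M \<and> y \<in> torsion_preimage r M \<and>
          (\<exists>t \<in> torsion_preimage r M. \<exists>l \<in> lap_image r M. (\<lambda>u. x u - y u) = (\<lambda>u. 2 * t u + l u))}"

text \<open>d(M) = dim_{F_2} (K(G) tensor Z/2), i.e. the d with |K/2K| = 2^d.\<close>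
definition d_inv :: "nat \<Rightarrow> (nat \<Rightarrow> bool) list \<Rightarrow> nat" where
  "d_inv r M = (THE d. card (sandpile_mod2 r M) = 2 ^ d)"

end

theory Submission
  imports Defs
begin


lemma add_self[simp]: "F2add u u = F2zero" by (simp add: F2add_def F2zero_def)
lemma add_zero[simp]: "F2add u F2zero = u" "F2add F2zero u = u" by (auto simp add: F2add_def F2zero_def)
lemma add_comm: "F2add u w = F2add w u" by (auto simp add: F2add_def)
lemma add_assoc: "F2add (F2add u v) w = F2add u (F2add v w)" by (auto simp add: F2add_def)
lemma add_cancel[simp]: "F2add u (F2add u w) = w" by (auto simp add: F2add_def)
lemma add_eq_zero_iff: "F2add u w = F2zero \<longleftrightarrow> u = w" by (auto simp add: F2add_def F2zero_def fun_eq_iff)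
lemma add_eq_iff: "F2add u v = w \<longleftrightarrow> v = F2add u w" by (auto simp add: F2add_def fun_eq_iff)
lemma add_vecs[intro]: "u \<in> F2vecs r \<Longrightarrow> w \<in> F2vecs r \<Longrightarrow> F2add u w \<in> F2vecs r"
  by (auto simp add: F2add_def F2vecs_def)
lemma zero_vecs[simp]: "F2zero \<in> F2vecs r" by (simp add: F2zero_def F2vecs_def)

lemma vecs_0: "F2vecs 0 = {F2zero}" by (auto simp add: F2zero_def F2vecs_def)

lemma vecs_Suc: "F2vecs (Suc r) = F2vecs r \<union> (\<lambda>w. w(r:=True)) ` F2vecs r"
proof (intro equalityI subsetI)
  fix v assume v: "v \<in> F2vecs (Suc r)"
  show "v \<in> F2vecs r \<union> (\<lambda>w. w(r:=True)) ` F2vecs r"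
  proof (cases "v r")
    case True
    then have "v = (v(r:=False))(r:=True)" by (simp add: fun_eq_iff)
    moreover have "v(r:=False) \<in> F2vecs r" using v by (auto simp: F2vecs_def)
    ultimately show ?thesis by blast
  next
    case False
    have "\<not> v i" if "r \<le> i" for i
      using v False that unfolding F2vecs_def by (cases "i = r") auto
    then have "v \<in> F2vecs r" unfolding F2vecs_def by blast
    then show ?thesis by blast
  qed
qed (auto simp: F2vecs_def)

lemma vecs_Suc_disj: "F2vecs r \<inter> (\<lambda>w. w(r:=True)) ` F2vecs r = {}"
  by (auto simp: F2vecs_def)

lemma inj_upd: "inj_on (\<lambda>w. w(r:=True)) (F2vecs r)"
  by (auto simp: inj_on_def F2vecs_def fun_eq_iff)

lemma finite_vecs[simp]: "finite (F2vecs r)"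
  by (induction r) (auto simp: vecs_0 vecs_Suc)

lemma card_vecs: "card (F2vecs r) = 2 ^ r"
proof (induction r)
  case 0 then show ?case by (simp add: vecs_0)
next
  case (Suc r)
  have "card (F2vecs (Suc r)) = card (F2vecs r) + card ((\<lambda>w. w(r:=True)) ` F2vecs r)"
    unfolding vecs_Suc by (rule card_Un_disjoint) (simp_all add: vecs_Suc_disj)
  also have "card ((\<lambda>w. w(r:=True)) ` F2vecs r) = card (F2vecs r)"
    by (rule card_image[OF inj_upd])
  finally show ?case using Suc by simp
qed

lemma sum_vecs_Suc: "(\<Sum>w\<in>F2vecs (Suc r). g w) = (\<Sum>w\<in>F2vecs r. g w) + (\<Sum>w\<in>F2vecs r. g (w(r:=True)))"
proof -
  have "(\<Sum>w\<in>F2vecs (Suc r). g w) = (\<Sum>w\<in>F2vecs r. g w) + (\<Sum>w\<in>(\<lambda>w. w(r:=True)) ` F2vecs r. g w)"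
    unfolding vecs_Suc by (rule sum.union_disjoint) (simp_all add: vecs_Suc_disj)
  also have "(\<Sum>w\<in>(\<lambda>w. w(r:=True)) ` F2vecs r. g w) = (\<Sum>w\<in>F2vecs r. g (w(r:=True)))"
    by (rule sum.reindex[OF inj_upd, unfolded comp_def])
  finally show ?thesis .
qed

lemma sum_shift: assumes "u \<in> F2vecs r" shows "(\<Sum>w\<in>F2vecs r. g (F2add u w)) = (\<Sum>w\<in>F2vecs r. g w)"
proof -
  have "bij_betw (F2add u) (F2vecs r) (F2vecs r)"
    by (rule bij_betw_byWitness[where f'="F2add u"]) (use assms in auto)
  then show ?thesis by (rule sum.reindex_bij_betw)
qed



lemma upd_add1: "\<not> u r \<Longrightarrow> \<not> k r \<Longrightarrow> F2add u (k(r:=True)) = (F2add u k)(r:=True)"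
  by (auto simp: F2add_def fun_eq_iff)
lemma upd_add2: "\<not> u r \<Longrightarrow> \<not> k r \<Longrightarrow> F2add (u(r:=True)) k = (F2add u k)(r:=True)"
  by (auto simp: F2add_def fun_eq_iff)
lemma upd_add3: "\<not> u r \<Longrightarrow> \<not> k r \<Longrightarrow> F2add (u(r:=True)) (k(r:=True)) = F2add u k"
  by (auto simp: F2add_def fun_eq_iff)
lemma vecs_not: "k \<in> F2vecs r \<Longrightarrow> \<not> k r" by (simp add: F2vecs_def)

lemma odd_conv:
  "\<forall>c :: (nat\<Rightarrow>bool) \<Rightarrow> int. (\<exists>v\<in>F2vecs r. odd (c v)) \<longrightarrow>
     (\<exists>Y \<subseteq> F2vecs r. \<forall>u\<in>F2vecs r. odd (\<Sum>w\<in>Y. c (F2add u w)))"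
proof (induction r)
  case 0
  show ?case
  proof (intro allI impI)
    fix c :: "(nat\<Rightarrow>bool) \<Rightarrow> int" assume "\<exists>v\<in>F2vecs 0. odd (c v)"
    then have "odd (c F2zero)" by (simp add: vecs_0)
    then show "\<exists>Y \<subseteq> F2vecs 0. \<forall>u\<in>F2vecs 0. odd (\<Sum>w\<in>Y. c (F2add u w))"
      by (intro exI[of _ "{F2zero}"]) (simp add: vecs_0)
  qed
next
  case (Suc r)
  show ?case
  proof (intro allI impI)
    fix c :: "(nat\<Rightarrow>bool) \<Rightarrow> int" assume cv: "\<exists>v\<in>F2vecs (Suc r). odd (c v)"
    define up where "up = (\<lambda>w::nat\<Rightarrow>bool. w(r:=True))"
    have sub: "F2vecs r \<subseteq> F2vecs (Suc r)" "up ` F2vecs r \<subseteq> F2vecs (Suc r)"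
      using vecs_Suc[of r] unfolding up_def by blast+
    have uvec: "u(r:=False) \<in> F2vecs r" "u = up (u(r:=False))" if "u \<in> F2vecs (Suc r)" "u r" for u
      using that unfolding up_def F2vecs_def by (auto simp: fun_eq_iff le_Suc_eq)
    have uvec2: "u \<in> F2vecs r" if "u \<in> F2vecs (Suc r)" "\<not> u r" for u
    proof -
      have "\<not> u i" if "r \<le> i" for i
        using \<open>u \<in> F2vecs (Suc r)\<close> \<open>\<not> u r\<close> that unfolding F2vecs_def by (cases "i = r") auto
      then show ?thesis unfolding F2vecs_def by blast
    qed
    show "\<exists>Y \<subseteq> F2vecs (Suc r). \<forall>u\<in>F2vecs (Suc r). odd (\<Sum>w\<in>Y. c (F2add u w))"
    proof (cases "\<exists>w\<in>F2vecs r. odd (c w + c (up w))")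
      case True
      then have "\<exists>Y\<subseteq>F2vecs r. \<forall>u\<in>F2vecs r. odd (\<Sum>w\<in>Y. c (F2add u w) + c (up (F2add u w)))"
        using Suc.IH[rule_format, of "\<lambda>w. c w + c (up w)"] by simp
      then obtain K where K: "K \<subseteq> F2vecs r" "\<forall>u\<in>F2vecs r. odd (\<Sum>w\<in>K. c (F2add u w) + c (up (F2add u w)))"
        by blast
      have fK: "finite K" using K(1) by (rule finite_subset) simp
      have injK: "inj_on up K" unfolding up_def by (rule inj_on_subset[OF inj_upd K(1)])
      have disj: "K \<inter> up ` K = {}"
      proof -
        have False if "w(r:=True) \<in> K" for w using that K(1) vecs_not[of "w(r:=True)" r] by auto
        then show ?thesis unfolding up_def by auto
      qed
      have split: "(\<Sum>w\<in>K \<union> up ` K. c (F2add u w)) = (\<Sum>k\<in>K. c (F2add u k)) + (\<Sum>k\<in>K. c (F2add u (up k)))" for u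
        using sum.union_disjoint[OF fK _ disj, of "\<lambda>w. c (F2add u w)"] fK
          sum.reindex[OF injK, of "\<lambda>w. c (F2add u w)"] by simp
      show ?thesis
      proof (intro exI[of _ "K \<union> up ` K"] conjI ballI)
        show "K \<union> up ` K \<subseteq> F2vecs (Suc r)" using K(1) sub by blast
        fix u assume u: "u \<in> F2vecs (Suc r)"
        show "odd (\<Sum>w\<in>K \<union> up ` K. c (F2add u w))"
        proof (cases "u r")
          case True
          define u' where "u' = u(r:=False)"
          have u': "u' \<in> F2vecs r" "u = up u'" using uvec[OF u True] u'_def by auto
          have "(\<Sum>w\<in>K \<union> up ` K. c (F2add u w)) = (\<Sum>k\<in>K. c (up (F2add u' k))) + (\<Sum>k\<in>K. c (F2add u' k))"
            unfolding split u'(2)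
            apply (intro arg_cong2[where f="(+)"] sum.cong refl)
            using K(1) u'(1) by (auto simp: up_def upd_add2 upd_add3 vecs_not)
          also have "\<dots> = (\<Sum>w\<in>K. c (F2add u' w) + c (up (F2add u' w)))" by (simp add: sum.distrib)
          finally show ?thesis using K(2) u'(1) by simp
        next
          case False
          have u2: "u \<in> F2vecs r" using uvec2[OF u False] .
          have "(\<Sum>w\<in>K \<union> up ` K. c (F2add u w)) = (\<Sum>k\<in>K. c (F2add u k)) + (\<Sum>k\<in>K. c (up (F2add u k)))"
            unfolding split
            apply (intro arg_cong2[where f="(+)"] sum.cong refl)
            using K(1) u2 by (auto simp: up_def upd_add1 vecs_not)
          also have "\<dots> = (\<Sum>w\<in>K. c (F2add u w) + c (up (F2add u w)))" by (simp add: sum.distrib)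
          finally show ?thesis using K(2) u2 by simp
        qed
      qed
    next
      case False
      then have ev: "\<forall>w\<in>F2vecs r. even (c w + c (up w))" by blast
      have "\<exists>w\<in>F2vecs r. odd (c (up w))"
      proof -
        obtain v where v: "v \<in> F2vecs (Suc r)" "odd (c v)" using cv by blast
        show ?thesis
        proof (cases "v r")
          case True
          have "odd (c (up (v(r:=False))))" using uvec[OF v(1) True] v(2) by simp
          then show ?thesis using uvec[OF v(1) True] by blast
        next
          case False
          then have "v \<in> F2vecs r" using uvec2 v(1) by blast
          then show ?thesis using ev v(2) by fastforce
        qed
      qed
      then have "\<exists>Y\<subseteq>F2vecs r. \<forall>u\<in>F2vecs r. odd (\<Sum>w\<in>Y. c (up (F2add u w)))"
        using Suc.IH[rule_format, of "\<lambda>w. c (up w)"] by simp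
      then obtain K where K: "K \<subseteq> F2vecs r" "\<forall>u\<in>F2vecs r. odd (\<Sum>w\<in>K. c (up (F2add u w)))"
        by blast
      show ?thesis
      proof (intro exI[of _ K] conjI ballI)
        show "K \<subseteq> F2vecs (Suc r)" using K(1) sub by blast
        fix u assume u: "u \<in> F2vecs (Suc r)"
        show "odd (\<Sum>w\<in>K. c (F2add u w))"
        proof (cases "u r")
          case True
          define u' where "u' = u(r:=False)"
          have u': "u' \<in> F2vecs r" "u = up u'" using uvec[OF u True] u'_def by auto
          have "(\<Sum>w\<in>K. c (F2add u w)) = (\<Sum>w\<in>K. c (up (F2add u' w)))"
            unfolding u'(2)
            apply (intro sum.cong refl)
            using K(1) u'(1) by (auto simp: up_def upd_add2 vecs_not)
          then show ?thesis using K(2) u'(1) by simp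
        next
          case False
          have u2: "u \<in> F2vecs r" using uvec2[OF u False] .
          have e: "even (\<Sum>w\<in>K. c (F2add u w) + c (up (F2add u w)))"
            using ev K(1) u2 by (intro dvd_sum) auto
          have "(\<Sum>w\<in>K. c (F2add u w)) = (\<Sum>w\<in>K. c (F2add u w) + c (up (F2add u w))) - (\<Sum>w\<in>K. c (up (F2add u w)))"
            by (simp add: sum.distrib)
          then show ?thesis using e K(2) u2 by simp
        qed
      qed
    qed
  qed
qed



definition cnt :: "(nat \<Rightarrow> bool) list \<Rightarrow> (nat \<Rightarrow> bool) \<Rightarrow> int" where
  "cnt M v = int (count_list M v)"

definition Lf :: "nat \<Rightarrow> (nat \<Rightarrow> bool) list \<Rightarrow> ((nat \<Rightarrow> bool) \<Rightarrow> int) \<Rightarrow> (nat \<Rightarrow> bool) \<Rightarrow> int" where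
  "Lf r M f u = int (length M) * f u - (\<Sum>w\<in>F2vecs r. cnt M (F2add u w) * f w)"

lemma card_count: "card {i. i < length M \<and> F2add u (M!i) = w} = count_list M (F2add u w)"
  by (simp add: count_list_eq_length_filter length_filter_conv_card add_eq_iff eq_commute)

lemma cnt_zero: "set M \<subseteq> F2vecs r - {F2zero} \<Longrightarrow> cnt M F2zero = 0"
  unfolding cnt_def by (subst count_notin) auto

lemma lap_eq:
  assumes "set M \<subseteq> F2vecs r - {F2zero}"
  shows "lap_apply r M x = (\<lambda>u. if u \<in> F2vecs r then Lf r M x u else 0)"
proof (rule ext)
  fix u
  show "lap_apply r M x u = (if u \<in> F2vecs r then Lf r M x u else 0)"
  proof (cases "u \<in> F2vecs r")
    case True
    have "cayley_laplacian M u w = (if u = w then int (length M) else 0) - cnt M (F2add u w)" for w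
      using cnt_zero[OF assms] unfolding cayley_laplacian_def card_count cnt_def by auto
    then have "(\<Sum>w\<in>F2vecs r. cayley_laplacian M u w * x w)
       = (\<Sum>w\<in>F2vecs r. (if u = w then int (length M) * x w else 0)) - (\<Sum>w\<in>F2vecs r. cnt M (F2add u w) * x w)"
    proof -
      have "(\<Sum>w\<in>F2vecs r. cayley_laplacian M u w * x w) = (\<Sum>w\<in>F2vecs r. (if u = w then int (length M) * x w else 0) - cnt M (F2add u w) * x w)"
        by (rule sum.cong[OF refl]) (simp add: \<open>\<And>w. cayley_laplacian M u w = _\<close> left_diff_distrib)
      then show ?thesis by (simp add: sum_subtractf)
    qed
    also have "\<dots> = Lf r M x u" using True unfolding Lf_def by (simp add: sum.delta)
    finally show ?thesis using True unfolding lap_apply_def by simp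
  qed (simp add: lap_apply_def)
qed

lemma exists_P:
  assumes M: "set M \<subseteq> F2vecs r - {F2zero}" and odd: "\<exists>w \<in> F2vecs r - {F2zero}. odd (count_list M w)"
  shows "\<exists>P \<in> int_vecs r. \<forall>u\<in>F2vecs r. odd (Lf r M P u)"
proof -
  define c where "c = (\<lambda>v. if v = F2zero then int (length M) else cnt M v)"
  have "\<exists>v\<in>F2vecs r. odd (c v)" using odd unfolding c_def cnt_def by auto
  then obtain Y where Y: "Y \<subseteq> F2vecs r" "\<forall>u\<in>F2vecs r. odd (\<Sum>w\<in>Y. c (F2add u w))"
    using odd_conv[of r] by blast
  define P where "P = (\<lambda>u. if u \<in> Y then 1 else 0::int)"
  have "P \<in> int_vecs r" using Y(1) unfolding P_def int_vecs_def by auto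
  moreover have "odd (Lf r M P u)" if u: "u \<in> F2vecs r" for u
  proof -
    have fY: "finite Y" using Y(1) by (rule finite_subset) simp
    have c_eq: "c v = cnt M v + (if v = F2zero then int (length M) else 0)" for v
      unfolding c_def using cnt_zero[OF M] by auto
    have s1: "(\<Sum>w\<in>F2vecs r. cnt M (F2add u w) * P w) = (\<Sum>w\<in>Y. cnt M (F2add u w))"
      unfolding P_def using Y(1) by (simp add: if_distrib sum.If_cases Int_absorb1 cong: if_cong)
    have s2: "(\<Sum>w\<in>Y. c (F2add u w)) = (\<Sum>w\<in>Y. cnt M (F2add u w)) + (if u \<in> Y then int (length M) else 0)"
      unfolding c_eq sum.distrib by (simp add: add_eq_zero_iff eq_commute[of u] sum.delta[OF fY])
    have "Lf r M P u = (\<Sum>w\<in>Y. c (F2add u w)) - 2 * (\<Sum>w\<in>Y. cnt M (F2add u w))"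
      unfolding Lf_def s1 s2 by (simp add: P_def)
    then show ?thesis using Y(2) u by simp
  qed
  ultimately show ?thesis by blast
qed



definition chi :: "nat \<Rightarrow> (nat \<Rightarrow> bool) \<Rightarrow> (nat \<Rightarrow> bool) \<Rightarrow> int" where
  "chi r s u = (\<Prod>i<r. if s i \<and> u i then -1 else 1)"

lemma chi_add: "chi r s (F2add u w) = chi r s u * chi r s w"
  unfolding chi_def prod.distrib[symmetric] by (rule prod.cong) (auto simp: F2add_def)

lemma chi_sym: "chi r s u = chi r u s"
  unfolding chi_def by (rule prod.cong) auto

lemma chi_sq: "chi r s u * chi r s u = 1"
  unfolding chi_def prod.distrib[symmetric] by (rule prod.neutral) auto

lemma chi_pm: "chi r s u = 1 \<or> chi r s u = -1"
  using chi_sq[of r s u] by (metis zmult_eq_1_iff)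

lemma chi_zero[simp]: "chi r F2zero u = 1" by (simp add: chi_def F2zero_def)

lemma chi_sum:
  assumes s: "s \<in> F2vecs r"
  shows "(\<Sum>u\<in>F2vecs r. chi r s u) = (if s = F2zero then int (card (F2vecs r)) else 0)"
proof (cases "s = F2zero")
  case True then show ?thesis by simp
next
  case False
  then obtain j where j: "s j" by (auto simp: F2zero_def fun_eq_iff)
  then have jr: "j < r" using s by (auto simp: F2vecs_def not_less[symmetric])
  define e where "e = (\<lambda>i::nat. i = j)"
  have e: "e \<in> F2vecs r" using jr by (auto simp: e_def F2vecs_def)
  have "chi r s e = (\<Prod>i<r. if i = j then -1 else 1)"
    unfolding chi_def e_def by (rule prod.cong) (auto simp: j)
  also have "\<dots> = -1" using jr by (simp add: prod.delta)
  finally have ce: "chi r s e = -1" .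
  have "(\<Sum>u\<in>F2vecs r. chi r s u) = (\<Sum>u\<in>F2vecs r. chi r s (F2add e u))"
    using sum_shift[OF e, of "chi r s"] by simp
  also have "\<dots> = - (\<Sum>u\<in>F2vecs r. chi r s u)"
    by (simp add: chi_add ce sum_negf)
  finally show ?thesis using False by simp
qed

lemma Lf_chi:
  assumes u: "u \<in> F2vecs r"
  shows "Lf r M (chi r s) u = (int (length M) - (\<Sum>v\<in>F2vecs r. cnt M v * chi r s v)) * chi r s u"
proof -
  have "(\<Sum>w\<in>F2vecs r. cnt M (F2add u w) * chi r s w) = (\<Sum>v\<in>F2vecs r. cnt M (F2add u (F2add u v)) * chi r s (F2add u v))"
    using sum_shift[OF u, of "\<lambda>w. cnt M (F2add u w) * chi r s w"] by simp
  also have "\<dots> = chi r s u * (\<Sum>v\<in>F2vecs r. cnt M v * chi r s v)"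
    by (simp add: chi_add sum_distrib_left mult_ac)
  finally show ?thesis unfolding Lf_def by (simp add: algebra_simps)
qed

definition lam :: "nat \<Rightarrow> (nat \<Rightarrow> bool) list \<Rightarrow> (nat \<Rightarrow> bool) \<Rightarrow> int" where
  "lam r M s = int (length M) - (\<Sum>v\<in>F2vecs r. cnt M v * chi r s v)"

lemma length_sum: "set M \<subseteq> F2vecs r \<Longrightarrow> int (length M) = (\<Sum>v\<in>F2vecs r. cnt M v)"
  unfolding cnt_def using sum_count_set[of M "F2vecs r"] by (simp flip: of_nat_sum)

lemma lam_pos:
  assumes M: "set M \<subseteq> F2vecs r" and v: "v \<in> set M" "chi r s v = -1"
  shows "lam r M s > 0"
proof -
  have "lam r M s = (\<Sum>v\<in>F2vecs r. cnt M v * (1 - chi r s v))"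
    unfolding lam_def length_sum[OF M] by (simp add: algebra_simps sum_subtractf)
  moreover have "cnt M v * (1 - chi r s v) \<le> (\<Sum>v\<in>F2vecs r. cnt M v * (1 - chi r s v))"
  proof (rule member_le_sum)
    show "v \<in> F2vecs r" using M v by blast
    fix x show "0 \<le> cnt M x * (1 - chi r s x)" using chi_pm[of r s x] by (auto simp: cnt_def)
  qed simp
  moreover have "cnt M v > 0" using v(1) unfolding cnt_def using count_list_0_iff[of M v] by simp
  ultimately show ?thesis using v(2) by simp
qed

lemma sum_Lf:
  assumes M: "set M \<subseteq> F2vecs r"
  shows "(\<Sum>u\<in>F2vecs r. Lf r M y u) = 0"
proof -
  have inner: "(\<Sum>u\<in>F2vecs r. cnt M (F2add u w)) = int (length M)" if w: "w \<in> F2vecs r" for w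
    using sum_shift[OF w, of "cnt M"] length_sum[OF M] by (simp add: add_comm)
  have "(\<Sum>u\<in>F2vecs r. \<Sum>w\<in>F2vecs r. cnt M (F2add u w) * y w) = (\<Sum>w\<in>F2vecs r. \<Sum>u\<in>F2vecs r. cnt M (F2add u w) * y w)"
    by (rule sum.swap)
  also have "\<dots> = (\<Sum>w\<in>F2vecs r. int (length M) * y w)"
    by (rule sum.cong[OF refl]) (simp add: sum_distrib_right[symmetric] inner)
  finally show ?thesis unfolding Lf_def by (simp add: sum_subtractf sum_distrib_left)
qed

lemma Lf_cong: "(\<And>w. w \<in> F2vecs r \<Longrightarrow> f w = g w) \<Longrightarrow> u \<in> F2vecs r \<Longrightarrow> Lf r M f u = Lf r M g u"
  unfolding Lf_def by (simp cong: sum.cong)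

lemma Lf_sum:
  assumes "finite S"
  shows "Lf r M (\<lambda>u. \<Sum>s\<in>S. a s * chi r s u) u = (\<Sum>s\<in>S. a s * Lf r M (chi r s) u)"
proof -
  have "(\<Sum>w\<in>F2vecs r. cnt M (F2add u w) * (\<Sum>s\<in>S. a s * chi r s w))
      = (\<Sum>s\<in>S. a s * (\<Sum>w\<in>F2vecs r. cnt M (F2add u w) * chi r s w))"
    by (simp add: sum_distrib_left sum.swap[of _ "F2vecs r"] mult_ac)
  then show ?thesis unfolding Lf_def
    by (simp add: sum_distrib_left right_diff_distrib sum_subtractf mult_ac)
qed



lemma Lf_lin: "Lf r M (\<lambda>u. y u + d * P u) u = Lf r M y u + d * Lf r M P u"
  unfolding Lf_def by (simp add: algebra_simps sum.distrib sum_distrib_left)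

lemma Lf_sum0:
  assumes M: "set M \<subseteq> F2vecs r - {F2zero}" and y: "y \<in> int_vecs r"
  shows "(\<Sum>u\<in>F2vecs r. lap_apply r M y u) = 0"
  using sum_Lf[of M r y] M unfolding lap_eq[OF M] by auto

lemma key_gen:
  assumes A: "set A \<subseteq> F2vecs r - {F2zero}" and B: "set B \<subseteq> F2vecs r - {F2zero}"
    and P: "P \<in> int_vecs r" "\<forall>u\<in>F2vecs r. odd (Lf r B P u)"
    and N: "int (card (F2vecs r)) = 2 * h"
    and rel: "\<And>y u. u \<in> F2vecs r \<Longrightarrow> Lf r A y u = Lf r B y u + c * (int (card (F2vecs r)) * y u - (\<Sum>w\<in>F2vecs r. y w))"
    and y: "y \<in> int_vecs r"
  shows "\<exists>z\<in>int_vecs r. \<exists>y'\<in>int_vecs r. lap_apply r A y = (\<lambda>u. 2 * z u + lap_apply r B y' u)"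
proof -
  define s where "s = (\<Sum>w\<in>F2vecs r. y w)"
  define y' where "y' = (\<lambda>u. y u + (- c * s) * P u)"
  define z where "z = (\<lambda>u. if u \<in> F2vecs r then c * h * y u + c * s * ((Lf r B P u - 1) div 2) else 0)"
  have "y' \<in> int_vecs r" using y P(1) unfolding y'_def int_vecs_def by auto
  moreover have "z \<in> int_vecs r" unfolding z_def int_vecs_def by auto
  moreover have "lap_apply r A y = (\<lambda>u. 2 * z u + lap_apply r B y' u)"
  proof (rule ext)
    fix u show "lap_apply r A y u = 2 * z u + lap_apply r B y' u"
    proof (cases "u \<in> F2vecs r")
      case True
      have ev: "2 * ((Lf r B P u - 1) div 2) = Lf r B P u - 1" using P(2) True by simp
      have "Lf r A y u = Lf r B y u + c * (2 * h * y u - s)" using rel[OF True] N s_def by simp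
      moreover have "Lf r B y' u = Lf r B y u + (- c * s) * Lf r B P u" unfolding y'_def by (rule Lf_lin)
      moreover have "2 * z u = 2 * c * h * y u + c * s * (Lf r B P u - 1)"
      proof -
        have "2 * z u = 2 * c * h * y u + c * s * (2 * ((Lf r B P u - 1) div 2))"
          using True unfolding z_def by (simp add: distrib_left mult_ac)
        then show ?thesis unfolding ev .
      qed
      ultimately show ?thesis using True unfolding lap_eq[OF A] lap_eq[OF B] by (simp add: algebra_simps)
    qed (simp add: lap_eq[OF A] lap_eq[OF B] z_def)
  qed
  ultimately show ?thesis by blast
qed



lemma chi_add_sym: "chi r (F2add w u) s = chi r s w * chi r s u"
  by (subst chi_sym) (rule chi_add)

lemma inversion:
  assumes u: "u \<in> F2vecs r"
  shows "(\<Sum>s\<in>F2vecs r. (\<Sum>w\<in>F2vecs r. x w * chi r s w) * chi r s u) = int (card (F2vecs r)) * x u"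
proof -
  have "(\<Sum>s\<in>F2vecs r. (\<Sum>w\<in>F2vecs r. x w * chi r s w) * chi r s u)
      = (\<Sum>s\<in>F2vecs r. \<Sum>w\<in>F2vecs r. x w * chi r (F2add w u) s)"
    by (rule sum.cong[OF refl]) (simp add: sum_distrib_right sum_distrib_left chi_add_sym mult_ac)
  also have "\<dots> = (\<Sum>w\<in>F2vecs r. x w * (\<Sum>s\<in>F2vecs r. chi r (F2add w u) s))"
    by (subst sum.swap) (simp add: sum_distrib_left)
  also have "\<dots> = (\<Sum>w\<in>F2vecs r. if w = u then x w * int (card (F2vecs r)) else 0)"
    by (rule sum.cong[OF refl]) (simp add: chi_sum[OF add_vecs[OF _ u]] add_eq_zero_iff)
  also have "\<dots> = int (card (F2vecs r)) * x u" using u by (simp add: sum.delta')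
  finally show ?thesis .
qed

lemma torsion_char:
  assumes M: "set M \<subseteq> F2vecs r - {F2zero}"
    and nd: "\<forall>s\<in>F2vecs r - {F2zero}. \<exists>v\<in>set M. chi r s v = -1"
  shows "torsion_preimage r M = {x\<in>int_vecs r. (\<Sum>u\<in>F2vecs r. x u) = 0}"
proof (intro equalityI subsetI)
  fix x assume "x \<in> torsion_preimage r M"
  then obtain k y where x: "x \<in> int_vecs r" and k: "k > 0" and y: "y \<in> int_vecs r"
    and eq: "(\<lambda>u. k * x u) = lap_apply r M y"
    unfolding torsion_preimage_def lap_image_def by blast
  have "\<And>u. k * x u = lap_apply r M y u" using eq by (simp add: fun_eq_iff)
  then have "(\<Sum>u\<in>F2vecs r. k * x u) = 0" using Lf_sum0[OF M y] by simp
  then have "k * (\<Sum>u\<in>F2vecs r. x u) = 0" by (simp add: sum_distrib_left)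
  then show "x \<in> {x\<in>int_vecs r. (\<Sum>u\<in>F2vecs r. x u) = 0}" using k x by simp
next
  fix x assume "x \<in> {x\<in>int_vecs r. (\<Sum>u\<in>F2vecs r. x u) = 0}"
  then have x: "x \<in> int_vecs r" and sx: "(\<Sum>u\<in>F2vecs r. x u) = 0" by auto
  define V0 where "V0 = F2vecs r - {F2zero}"
  have fV0: "finite V0" unfolding V0_def by simp
  define xh where "xh s = (\<Sum>w\<in>F2vecs r. x w * chi r s w)" for s
  have lp: "lam r M s > 0" if "s \<in> V0" for s
  proof -
    have "s \<in> F2vecs r - {F2zero}" using that unfolding V0_def .
    then obtain v where v: "v \<in> set M" "chi r s v = -1" using nd by blast
    have "set M \<subseteq> F2vecs r" using M by blast
    then show ?thesis using lam_pos v by blast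
  qed
  define P where "P = (\<Prod>s\<in>V0. lam r M s)"
  have Ppos: "P > 0" unfolding P_def using lp by (intro prod_pos) auto
  have Pdvd: "(P div lam r M s) * lam r M s = P" if "s \<in> V0" for s
    unfolding P_def using dvd_prodI[OF fV0 that, of "lam r M"] by simp
  define N where "N = int (card (F2vecs r))"
  have Npos: "N > 0" unfolding N_def by (simp add: card_gt_0_iff) (use zero_vecs in blast)
  define a where "a s = xh s * (P div lam r M s)" for s
  define y where "y = (\<lambda>u. if u \<in> F2vecs r then (\<Sum>s\<in>V0. a s * chi r s u) else 0)"
  have y_int: "y \<in> int_vecs r" unfolding y_def int_vecs_def by auto
  have xh0: "xh F2zero = 0" unfolding xh_def using sx by simp
  have "(\<lambda>u. (P * N) * x u) = lap_apply r M y"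
  proof (rule ext)
    fix u show "(P * N) * x u = lap_apply r M y u"
    proof (cases "u \<in> F2vecs r")
      case True
      have "Lf r M y u = Lf r M (\<lambda>u. \<Sum>s\<in>V0. a s * chi r s u) u"
        by (rule Lf_cong[OF _ True]) (simp add: y_def)
      also have "\<dots> = (\<Sum>s\<in>V0. a s * Lf r M (chi r s) u)" by (rule Lf_sum[OF fV0])
      also have "\<dots> = (\<Sum>s\<in>V0. P * (xh s * chi r s u))"
      proof (rule sum.cong[OF refl])
        fix s assume s: "s \<in> V0"
        have "a s * Lf r M (chi r s) u = xh s * ((P div lam r M s) * lam r M s) * chi r s u"
          unfolding Lf_chi[OF True] a_def lam_def by (simp add: mult_ac)
        then show "a s * Lf r M (chi r s) u = P * (xh s * chi r s u)" using Pdvd[OF s] by simp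
      qed
      also have "\<dots> = P * (\<Sum>s\<in>V0. xh s * chi r s u)" by (simp add: sum_distrib_left)
      also have "(\<Sum>s\<in>V0. xh s * chi r s u) = (\<Sum>s\<in>F2vecs r. xh s * chi r s u)"
        unfolding V0_def using xh0 by (subst sum.remove[of "F2vecs r" F2zero]) auto
      also have "\<dots> = N * x u" unfolding xh_def N_def by (rule inversion[OF True])
      finally show ?thesis using True unfolding lap_eq[OF M] by simp
    next
      case False then show ?thesis using x unfolding lap_eq[OF M] int_vecs_def by simp
    qed
  qed
  then have im: "(\<lambda>u. (P * N) * x u) \<in> lap_image r M"
    unfolding lap_image_def using y_int by (rule image_eqI)
  have "P * N > 0" using Ppos Npos by simp
  then show "x \<in> torsion_preimage r M"
    unfolding torsion_preimage_def using x im by blast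
qed



lemma chi_e:
  assumes s: "s \<in> F2vecs r" "s \<noteq> F2zero"
  shows "\<exists>e\<in>F2vecs r - {F2zero}. chi r s e = -1"
proof -
  obtain j where j: "s j" using s(2) by (auto simp: F2zero_def fun_eq_iff)
  then have jr: "j < r" using s by (auto simp: F2vecs_def not_less[symmetric])
  define e where "e = (\<lambda>i::nat. i = j)"
  have e: "e \<in> F2vecs r - {F2zero}" using jr by (auto simp: e_def F2vecs_def F2zero_def fun_eq_iff)
  have "chi r s e = (\<Prod>i<r. if i = j then -1 else 1)"
    unfolding chi_def e_def by (rule prod.cong) (auto simp: j)
  also have "\<dots> = -1" using jr by (simp add: prod.delta)
  finally show ?thesis using e by blast
qed

lemma chi_comb:
  assumes S: "S \<subseteq> {..<length M}"
  shows "chi r s (F2comb M S) = (\<Prod>i\<in>S. chi r s (M!i))"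
proof -
  have fS: "finite S" using S finite_subset by auto
  have "(\<Prod>i\<in>S. chi r s (M!i)) = (\<Prod>j<r. \<Prod>i\<in>S. if s j \<and> (M!i) j then -1 else 1)"
    unfolding chi_def by (rule prod.swap)
  also have "\<dots> = chi r s (F2comb M S)"
    unfolding chi_def
  proof (rule prod.cong[OF refl])
    fix j
    define A where "A = {i\<in>S. (M!i) j}"
    have "(\<Prod>i\<in>S. if s j \<and> (M!i) j then -1 else 1) = (\<Prod>i\<in>S. if i \<in> A then (if s j then -1 else (1::int)) else 1)"
      unfolding A_def by (rule prod.cong) auto
    also have "\<dots> = (\<Prod>i\<in>S \<inter> A. if s j then -1 else (1::int))"
      using prod.inter_restrict[OF fS, of "\<lambda>i. if s j then -1 else (1::int)" A] by simp
    also have "S \<inter> A = A" unfolding A_def by blast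
    finally have "(\<Prod>i\<in>S. if s j \<and> (M!i) j then -1 else 1) = (\<Prod>i\<in>A. if s j then -1 else (1::int))" .
    also have "\<dots> = (if s j then (-1) ^ card A else 1)" by simp
    also have "\<dots> = (if s j \<and> F2comb M S j then -1 else 1)"
      unfolding F2comb_def A_def[symmetric] by (cases "even (card A)") auto
    finally show "(\<Prod>i\<in>S. if s j \<and> (M!i) j then -1 else 1) = (if s j \<and> F2comb M S j then -1 else (1::int))" .
  qed
  finally show ?thesis by simp
qed

lemma nd_gen:
  assumes gen: "generates r M"
  shows "\<forall>s\<in>F2vecs r - {F2zero}. \<exists>v\<in>set M. chi r s v = -1"
proof (rule ccontr)
  assume "\<not> ?thesis"
  then obtain s where s: "s \<in> F2vecs r" "s \<noteq> F2zero" and no: "\<forall>v\<in>set M. chi r s v \<noteq> -1" by blast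
  have one: "chi r s v = 1" if "v \<in> set M" for v using no that chi_pm[of r s v] by blast
  obtain e where e: "e \<in> F2vecs r - {F2zero}" "chi r s e = -1" using chi_e[OF s] by blast
  obtain S where S: "S \<subseteq> {..<length M}" "e = F2comb M S" using gen e(1) unfolding generates_def by blast
  have "chi r s e = (\<Prod>i\<in>S. chi r s (M!i))" using chi_comb[OF S(1)] S(2) by simp
  also have "\<dots> = 1" using S(1) one by (intro prod.neutral) auto
  finally show False using e(2) by simp
qed

lemma nd_M':
  assumes "\<forall>u \<in> F2vecs r - {F2zero}. count_list M' u = count_list M u + 1"
  shows "\<forall>s\<in>F2vecs r - {F2zero}. \<exists>v\<in>set M'. chi r s v = -1"
proof
  fix s assume s: "s \<in> F2vecs r - {F2zero}"
  obtain e where e: "e \<in> F2vecs r - {F2zero}" "chi r s e = -1" using chi_e s by blast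
  have "count_list M' e \<noteq> 0" using assms e(1) by simp
  then have "e \<in> set M'" using count_list_0_iff by metis
  then show "\<exists>v\<in>set M'. chi r s v = -1" using e(2) by blast
qed

lemma Lf_M':
  assumes M: "set M \<subseteq> F2vecs r - {F2zero}" and M': "set M' \<subseteq> F2vecs r - {F2zero}"
    and cnt: "\<forall>u \<in> F2vecs r - {F2zero}. count_list M' u = count_list M u + 1"
    and u: "u \<in> F2vecs r"
  shows "Lf r M y u = Lf r M' y u + (-1) * (int (card (F2vecs r)) * y u - (\<Sum>w\<in>F2vecs r. y w))"
proof -
  have c': "cnt M' v = cnt M v + (if v = F2zero then 0 else 1)" if "v \<in> F2vecs r" for v
    using that cnt cnt_zero[OF M] cnt_zero[OF M'] unfolding cnt_def by auto
  have "int (length M') = (\<Sum>v\<in>F2vecs r. cnt M' v)" using M' by (intro length_sum) blast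
  also have "\<dots> = (\<Sum>v\<in>F2vecs r. cnt M v + (1 - (if v = F2zero then 1 else 0)))"
    by (rule sum.cong[OF refl]) (simp add: c')
  also have "\<dots> = int (length M) + int (card (F2vecs r)) - 1"
  proof -
    have "set M \<subseteq> F2vecs r" using M by blast
    then show ?thesis using length_sum[of M r] by (simp add: sum.distrib sum_subtractf)
  qed
  finally have len: "int (length M') = int (length M) + int (card (F2vecs r)) - 1" .
  have "(\<Sum>w\<in>F2vecs r. cnt M' (F2add u w) * y w)
      = (\<Sum>w\<in>F2vecs r. cnt M (F2add u w) * y w + (y w - (if w = u then y w else 0)))"
    by (rule sum.cong[OF refl]) (simp add: c'[OF add_vecs[OF u]] add_eq_zero_iff algebra_simps)
  also have "\<dots> = (\<Sum>w\<in>F2vecs r. cnt M (F2add u w) * y w) + (\<Sum>w\<in>F2vecs r. y w) - y u"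
    using u by (simp add: sum.distrib sum_subtractf sum.delta')
  finally show ?thesis unfolding Lf_def len by (simp add: algebra_simps)
qed

lemma step_rel:
  assumes TA: "S = {x\<in>int_vecs r. (\<Sum>u\<in>F2vecs r. x u) = 0}"
    and B: "set B \<subseteq> F2vecs r - {F2zero}"
    and key: "\<forall>y\<in>int_vecs r. \<exists>z\<in>int_vecs r. \<exists>y'\<in>int_vecs r. lap_apply r A y = (\<lambda>u. 2 * z u + lap_apply r B y' u)"
    and x: "x \<in> S" and y: "y \<in> S" and t: "t \<in> S" and l: "l \<in> lap_image r A"
    and eq: "(\<lambda>u. x u - y u) = (\<lambda>u. 2 * t u + l u)"
  shows "\<exists>t'\<in>S. \<exists>l'\<in>lap_image r B. (\<lambda>u. x u - y u) = (\<lambda>u. 2 * t' u + l' u)"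
proof -
  obtain y0 where y0: "y0 \<in> int_vecs r" "l = lap_apply r A y0" using l unfolding lap_image_def by blast
  obtain z y' where zy: "z \<in> int_vecs r" "y' \<in> int_vecs r" "lap_apply r A y0 = (\<lambda>u. 2 * z u + lap_apply r B y' u)"
    using key y0(1) by blast
  have eqs: "x u - y u = 2 * (t u + z u) + lap_apply r B y' u" for u
    using fun_cong[OF eq, of u] fun_cong[OF zy(3), of u] y0(2) by simp
  have "(\<Sum>u\<in>F2vecs r. x u - y u) = (\<Sum>u\<in>F2vecs r. 2 * (t u + z u) + lap_apply r B y' u)"
    using eqs by simp
  then have "0 = 2 * (\<Sum>u\<in>F2vecs r. t u + z u) + (\<Sum>u\<in>F2vecs r. lap_apply r B y' u)"
    using x y TA by (simp add: sum.distrib sum_subtractf sum_distrib_left)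
  then have "(\<Sum>u\<in>F2vecs r. t u + z u) = 0" using Lf_sum0[OF B zy(2)] by simp
  moreover have "(\<lambda>u. t u + z u) \<in> int_vecs r" using t zy(1) TA unfolding int_vecs_def by auto
  ultimately have "(\<lambda>u. t u + z u) \<in> S" using TA by simp
  moreover have "lap_apply r B y' \<in> lap_image r B" unfolding lap_image_def using zy(2) by simp
  moreover have "(\<lambda>u. x u - y u) = (\<lambda>u. 2 * (t u + z u) + lap_apply r B y' u)" using eqs by simp
  ultimately show ?thesis
    by (intro bexI[of _ "\<lambda>u. t u + z u"] bexI[of _ "lap_apply r B y'"]) simp_all
qed

theorem mainTheorem5:
  fixes r :: nat and M M' :: "(nat \<Rightarrow> bool) list"
  assumes "r \<ge> 1"
    and "set M \<subseteq> F2vecs r - {F2zero}"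
    and "generates r M"
    and "\<exists>u \<in> F2vecs r - {F2zero}. \<exists>w \<in> F2vecs r - {F2zero}.
           even (count_list M u) \<and> odd (count_list M w)"
    and "set M' \<subseteq> F2vecs r - {F2zero}"
    and "\<forall>u \<in> F2vecs r - {F2zero}. count_list M' u = count_list M u + 1"
  shows "d_inv r M = d_inv r M'"
proof -
  note M = assms(2) and M' = assms(5) and cnt = assms(6)
  define S where "S = {x\<in>int_vecs r. (\<Sum>u\<in>F2vecs r. x u) = 0}"
  have TM: "torsion_preimage r M = S" unfolding S_def by (rule torsion_char[OF M nd_gen[OF assms(3)]])
  have TM': "torsion_preimage r M' = S" unfolding S_def by (rule torsion_char[OF M' nd_M'[OF cnt]])
  obtain u w where uw: "u \<in> F2vecs r - {F2zero}" "w \<in> F2vecs r - {F2zero}" "even (count_list M u)" "odd (count_list M w)"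
    using assms(4) by blast
  obtain P where P: "P \<in> int_vecs r" "\<forall>u\<in>F2vecs r. odd (Lf r M P u)"
    using exists_P[OF M] uw by blast
  have "odd (count_list M' u)" using cnt uw by simp
  then obtain P' where P': "P' \<in> int_vecs r" "\<forall>u\<in>F2vecs r. odd (Lf r M' P' u)"
    using exists_P[OF M'] uw by blast
  have N: "int (card (F2vecs r)) = 2 * 2 ^ (r - 1)"
    using assms(1) by (simp add: card_vecs power_Suc[symmetric])
  have key1: "\<forall>y\<in>int_vecs r. \<exists>z\<in>int_vecs r. \<exists>y'\<in>int_vecs r. lap_apply r M y = (\<lambda>u. 2 * z u + lap_apply r M' y' u)"
    using key_gen[OF M M' P' N, of "-1"] Lf_M'[OF M M' cnt] by blast
  have key2: "\<forall>y\<in>int_vecs r. \<exists>z\<in>int_vecs r. \<exists>y'\<in>int_vecs r. lap_apply r M' y = (\<lambda>u. 2 * z u + lap_apply r M y' u)"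
  proof
    fix y assume y: "y \<in> int_vecs r"
    have "Lf r M' y u = Lf r M y u + 1 * (int (card (F2vecs r)) * y u - (\<Sum>w\<in>F2vecs r. y w))"
      if "u \<in> F2vecs r" for u y using Lf_M'[OF M M' cnt that, of y] by simp
    then show "\<exists>z\<in>int_vecs r. \<exists>y'\<in>int_vecs r. lap_apply r M' y = (\<lambda>u. 2 * z u + lap_apply r M y' u)"
      using key_gen[OF M' M P N, of 1] y by blast
  qed
  have releq: "(\<exists>t\<in>S. \<exists>l\<in>lap_image r M. (\<lambda>u. x u - y u) = (\<lambda>u. 2 * t u + l u)) \<longleftrightarrow>
       (\<exists>t\<in>S. \<exists>l\<in>lap_image r M'. (\<lambda>u. x u - y u) = (\<lambda>u. 2 * t u + l u))"
    if "x \<in> S" "y \<in> S" for x y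
  proof
    assume "\<exists>t\<in>S. \<exists>l\<in>lap_image r M. (\<lambda>u. x u - y u) = (\<lambda>u. 2 * t u + l u)"
    then obtain t l where "t \<in> S" "l \<in> lap_image r M" "(\<lambda>u. x u - y u) = (\<lambda>u. 2 * t u + l u)" by blast
    then show "\<exists>t\<in>S. \<exists>l\<in>lap_image r M'. (\<lambda>u. x u - y u) = (\<lambda>u. 2 * t u + l u)"
      using step_rel[OF S_def M' key1 that] by blast
  next
    assume "\<exists>t\<in>S. \<exists>l\<in>lap_image r M'. (\<lambda>u. x u - y u) = (\<lambda>u. 2 * t u + l u)"
    then obtain t l where "t \<in> S" "l \<in> lap_image r M'" "(\<lambda>u. x u - y u) = (\<lambda>u. 2 * t u + l u)" by blast
    then show "\<exists>t\<in>S. \<exists>l\<in>lap_image r M. (\<lambda>u. x u - y u) = (\<lambda>u. 2 * t u + l u)"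
      using step_rel[OF S_def M key2 that] by blast
  qed
  have "{(x, y). x \<in> S \<and> y \<in> S \<and> (\<exists>t\<in>S. \<exists>l\<in>lap_image r M. (\<lambda>u. x u - y u) = (\<lambda>u. 2 * t u + l u))}
      = {(x, y). x \<in> S \<and> y \<in> S \<and> (\<exists>t\<in>S. \<exists>l\<in>lap_image r M'. (\<lambda>u. x u - y u) = (\<lambda>u. 2 * t u + l u))}"
    using releq by blast
  then have "sandpile_mod2 r M = sandpile_mod2 r M'"
    unfolding sandpile_mod2_def TM TM' by simp
  then show ?thesis unfolding d_inv_def by simp
qed

end
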